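(* In the limit $s_1s_2\to1$ one has $$\chi(\mathcal M^{1,1}(M_1,M_2),\mathcal O)_{s_1s_2\to1}=\chi(\mathring{\mathcal M}^{1,1}(M_1,M_2),\mathcal O)_{s_1s_2\to1}.$$ In other words, every $\mathbf T_{\mathrm{edge}}$-fixed point of $\mathcal M^{1,1}(M_1,M_2)$ that lies outside $\mathring{\mathcal M}^{1,1}(M_1,M_2)$ (equivalently, every fixed point for which some $Y^{(2)}_{(i,j)}$ is non-empty) has localization contribution tending to $0$ as $s_1s_2\to1$.
   Context: Fix $\xi>0$ and integers $M_1,M_2\ge0$. $\mathcal M^{1,1}(M_1,M_2)$ is the space of tuples $(X,Y,I,J,\tilde X,\tilde Y,\tilde I,\tilde J,S)$ with $X,Y\in\mathrm{End}(\mathbb C^{M_1})$, $I\in\mathrm{Hom}(\mathbb C,\mathbb C^{M_1})$, $J\in\mathrm{Hom}(\mathbb C^{M_1},\mathbb C)$, $\tilde X,\tilde Y\in\mathrm{End}(\mathbb C^{M_2})$, $\tilde I\in\mathrm{Hom}(\mathbb C,\mathbb C^{M_2})$, $\tilde J\in\mathrm{Hom}(\mathbb C^{M_2},\mathbb C)$, $S\in\mathrm{Hom}(\mathbb C^{M_1},\mathbb C^{M_2})$ satisfying $[X,Y]+IJ=0$, $[\tilde X,\tilde Y]+\tilde I\tilde J=0$ and the stability condition $\mathbb C\langle X,Y\rangle\mathrm{Im}(I)=\mathbb C^{M_1}$, $\mathbb C\langle\tilde X,\tilde Y\rangle(\mathrm{Im}\tilde I+\mathrm{Im}S)=\mathbb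 C^{M_2}$, modulo $GL_{M_1}\times GL_{M_2}$ acting by $(g,h)$: $X\mapsto gXg^{-1}$, $Y\mapsto gYg^{-1}$, $I\mapsto gI$, $J\mapsto Jg^{-1}$, similarly for the tilded maps with $h$, and $S\mapsto hSg^{-1}$. $\mathring{\mathcal M}^{1,1}(M_1,M_2)$ is the open subset where $\mathbb C\langle\tilde X,\tilde Y\rangle\mathrm{Im}(\tilde I)=\mathbb C^{M_2}$. The torus $\mathbf T_{\mathrm{edge}}=(\mathbb C^\times)^5\ni(r_1,r_2,s_1,s_2,t)$ acts by $(X,Y,I,J)\mapsto(r_1X,r_2Y,I,r_1r_2J)$, $(\tilde X,\tilde Y,\tilde I,\tilde J)\mapsto(s_1\tilde X,s_2\tilde Y,\tilde I,s_1s_2\tilde J)$, $S\mapsto tS$. Its fixed points on $\mathcal M^{1,1}(M_1,M_2)$ are isolated and labelled by a Young diagram $Y^{(1)}$ with $M_1$ boxes, a Young diagram $Y^{(2)}_0$, and a Young diagram $Y^{(2)}_{(i,j)}$ for each box $(i,j)\in Y^{(1)}$, with $|Y^{(2)}_0|+\sum|Y^{(2)}_{(i,j)}|=M_2$; the fixed points in $\mathring{\mathcal M}^{1,1}(M_1,M_2)$ are those with all $Y^{(2)}_{(i,j)}=\emptyset$. With $w_r(Y)=\sum_{(i,j)\in Y}r_1^{-i}r_2^{-j}$, $w_s(Y)=\sum_{(i,j)\in Y}s_1^{-i}s_2^{-j}$, set at a fixed point $\mathcal V_1=w_r(Y^{(1)})$, $\mathcal V_2=w_s(Y^{(2)}_0)+t^{-1}\sum_{(i,j)\in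 Y^{(1)}}r_1^{-i}r_2^{-j}w_s(Y^{(2)}_{(i,j)})$ and $T^{\mathrm{vir}}=\mathcal V_1+\mathcal V_1^*r_1r_2-\mathcal V_1\mathcal V_1^*(1-r_1)(1-r_2)+\mathcal V_2+\mathcal V_2^*s_1s_2-\mathcal V_2\mathcal V_2^*(1-s_1)(1-s_2)+t\mathcal V_2\mathcal V_1^*$, where ${}^*$ inverts $r_1,r_2,s_1,s_2,t$. For $\sum_wa_ww$ a Laurent polynomial with integer coefficients, $S^\bullet(\sum a_ww)=\prod_w(1-w)^{-a_w}$. The localization contribution of a fixed point is $(S^\bullet(T^{\mathrm{vir}}))^*$; $\chi(\mathcal M^{1,1}(M_1,M_2),\mathcal O)$ is the sum of contributions over all fixed points and $\chi(\mathring{\mathcal M}^{1,1}(M_1,M_2),\mathcal O)$ is the sum over the fixed points lying in $\mathring{\mathcal M}^{1,1}(M_1,M_2)$. *)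

theory Defs
  imports "HOL-Analysis.Analysis" "HOL-Library.Product_Plus"
begin

(* A Laurent monomial r1^a r2^b s1^c s2^d t^e is its exponent vector (a,b,c,d,e);
   multiplication of monomials is + on exponent vectors (Product_Plus). *)
type_synonym mono = "int \<times> int \<times> int \<times> int \<times> int"

(* A Laurent polynomial with integer coefficients: coefficient function, finite support. *)
type_synonym lpoly = "mono \<Rightarrow> int"

definition lp_supp :: "lpoly \<Rightarrow> mono set" where
  "lp_supp p = {m. p m \<noteq> 0}"

definition lp_mono :: "mono \<Rightarrow> lpoly" where
  "lp_mono c = (\<lambda>m. if m = c then 1 else 0)"

(* sum of the monomials f x, x \<in> A (with multiplicity) *)
definition lp_sum :: "'x set \<Rightarrow> ('x \<Rightarrow> mono) \<Rightarrow> lpoly" where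
  "lp_sum A f = (\<lambda>m. int (card {x \<in> A. f x = m}))"

definition lp_add :: "lpoly \<Rightarrow> lpoly \<Rightarrow> lpoly" where
  "lp_add p q = (\<lambda>m. p m + q m)"

definition lp_sub :: "lpoly \<Rightarrow> lpoly \<Rightarrow> lpoly" where
  "lp_sub p q = (\<lambda>m. p m - q m)"

definition lp_mul :: "lpoly \<Rightarrow> lpoly \<Rightarrow> lpoly" where
  "lp_mul p q = (\<lambda>m. \<Sum>a\<in>lp_supp p. p a * q (m - a))"

(* multiplication by the monomial c *)
definition lp_shift :: "mono \<Rightarrow> lpoly \<Rightarrow> lpoly" where
  "lp_shift c p = (\<lambda>m. p (m - c))"

(* the involution * inverting all of r1,r2,s1,s2,t *)
definition lp_dual :: "lpoly \<Rightarrow> lpoly" where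
  "lp_dual p = (\<lambda>m. p (- m))"

abbreviation "m_r1 \<equiv> ((1,0,0,0,0) :: mono)"
abbreviation "m_r2 \<equiv> ((0,1,0,0,0) :: mono)"
abbreviation "m_s1 \<equiv> ((0,0,1,0,0) :: mono)"
abbreviation "m_s2 \<equiv> ((0,0,0,1,0) :: mono)"
abbreviation "m_t  \<equiv> ((0,0,0,0,1) :: mono)"

fun mono_eval :: "mono \<Rightarrow> complex \<times> complex \<times> complex \<times> complex \<times> complex \<Rightarrow> complex" where
  "mono_eval (a,b,c,d,e) (r1,r2,s1,s2,t) =
     r1 powi a * r2 powi b * s1 powi c * s2 powi d * t powi e"

(* (S^\<bullet>(\<Sum> a_w w))^* = \<Prod>_w (1 - w^{-1})^{-a_w}, evaluated at a point *)
definition contrib_of :: "lpoly \<Rightarrow> complex \<times> complex \<times> complex \<times> complex \<times> complex \<Rightarrow> complex" where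
  "contrib_of T z = (\<Prod>w\<in>lp_supp T. (1 - mono_eval (- w) z) powi (- T w))"

definition young :: "(nat \<times> nat) set \<Rightarrow> bool" where
  "young Y \<longleftrightarrow> finite Y \<and> (\<forall>i j i' j'. (i,j) \<in> Y \<longrightarrow> i' \<le> i \<longrightarrow> j' \<le> j \<longrightarrow> (i',j') \<in> Y)"

(* a fixed-point label (Y1, Y2_0, box \<mapsto> Y2_(i,j)) *)
type_synonym fp = "(nat \<times> nat) set \<times> (nat \<times> nat) set \<times> (nat \<times> nat \<Rightarrow> (nat \<times> nat) set)"

definition fixed_points :: "nat \<Rightarrow> nat \<Rightarrow> fp set" where
  "fixed_points M1 M2 = {(Y1, Y0, Y2).
      young Y1 \<and> card Y1 = M1 \<and> young Y0 \<and>
      (\<forall>b\<in>Y1. young (Y2 b)) \<and> (\<forall>b. b \<notin> Y1 \<longrightarrow> Y2 b = {}) \<and>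
      card Y0 + (\<Sum>b\<in>Y1. card (Y2 b)) = M2}"

definition ring_fixed_points :: "nat \<Rightarrow> nat \<Rightarrow> fp set" where
  "ring_fixed_points M1 M2 = {(Y1, Y0, Y2) \<in> fixed_points M1 M2. \<forall>b \<in> Y1. Y2 b = {}}"

definition V1_of :: "fp \<Rightarrow> lpoly" where
  "V1_of p = (case p of (Y1, Y0, Y2) \<Rightarrow>
     lp_sum Y1 (\<lambda>(i,j). (- int i, - int j, 0, 0, 0)))"

definition V2_of :: "fp \<Rightarrow> lpoly" where
  "V2_of p = (case p of (Y1, Y0, Y2) \<Rightarrow>
     lp_add (lp_sum Y0 (\<lambda>(k,l). (0, 0, - int k, - int l, 0)))
            (lp_sum (SIGMA b:Y1. Y2 b)
               (\<lambda>((i,j),(k,l)). (- int i, - int j, - int k, - int l, -1))))"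

definition one_minus_sq :: "mono \<Rightarrow> mono \<Rightarrow> lpoly" where
  "one_minus_sq x y = lp_mul (lp_sub (lp_mono 0) (lp_mono x)) (lp_sub (lp_mono 0) (lp_mono y))"

definition Tvir :: "fp \<Rightarrow> lpoly" where
  "Tvir p = (let V1 = V1_of p; V2 = V2_of p in
     (\<lambda>m. V1 m + lp_shift (m_r1 + m_r2) (lp_dual V1) m
          - lp_mul (lp_mul V1 (lp_dual V1)) (one_minus_sq m_r1 m_r2) m
          + V2 m + lp_shift (m_s1 + m_s2) (lp_dual V2) m
          - lp_mul (lp_mul V2 (lp_dual V2)) (one_minus_sq m_s1 m_s2) m
          + lp_shift m_t (lp_mul V2 (lp_dual V1)) m))"

definition contrib :: "fp \<Rightarrow> complex \<times> complex \<times> complex \<times> complex \<times> complex \<Rightarrow> complex" where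
  "contrib p z = contrib_of (Tvir p) z"

definition chi_M :: "nat \<Rightarrow> nat \<Rightarrow> complex \<times> complex \<times> complex \<times> complex \<times> complex \<Rightarrow> complex" where
  "chi_M M1 M2 z = (\<Sum>p\<in>fixed_points M1 M2. contrib p z)"

definition chi_Mring :: "nat \<Rightarrow> nat \<Rightarrow> complex \<times> complex \<times> complex \<times> complex \<times> complex \<Rightarrow> complex" where
  "chi_Mring M1 M2 z = (\<Sum>p\<in>ring_fixed_points M1 M2. contrib p z)"

end

theory Submission
  imports Defs
begin

definition ind :: "bool \<Rightarrow> int" where "ind b = (if b then 1 else 0)"

lemma card_ind: assumes "finite A" shows "int (card {x\<in>A. P x}) = (\<Sum>x\<in>A. ind (P x))"
proof -
  have "(\<Sum>x\<in>A. ind (P x)) = (\<Sum>x\<in>{x\<in>A. P x}. 1)"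
    unfolding ind_def using sum.inter_filter[OF assms, of "\<lambda>_. (1::int)" P] by simp
  then show ?thesis by simp
qed

lemma lp_sum_eq: "finite A \<Longrightarrow> lp_sum A f m = (\<Sum>x\<in>A. ind (f x = m))"
  unfolding lp_sum_def by (rule card_ind)

lemma lp_sum_supp: "lp_supp (lp_sum A f) \<subseteq> f ` A"
proof
  fix m assume "m \<in> lp_supp (lp_sum A f)"
  then have "{x\<in>A. f x = m} \<noteq> {}" unfolding lp_supp_def lp_sum_def by (metis (mono_tags) card.empty mem_Collect_eq of_nat_0)
  then show "m \<in> f ` A" by blast
qed

lemma lp_sum_mul: assumes "finite A" shows "lp_mul (lp_sum A f) q m = (\<Sum>x\<in>A. q (m - f x))"
proof -
  have "lp_mul (lp_sum A f) q m = (\<Sum>a\<in>f ` A. lp_sum A f a * q (m - a))"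
    unfolding lp_mul_def
    by (rule sum.mono_neutral_left) (use assms lp_sum_supp in \<open>auto simp: lp_supp_def\<close>)
  also have "\<dots> = (\<Sum>a\<in>f ` A. (\<Sum>x\<in>{x\<in>A. f x = a}. q (m - f x)))"
    unfolding lp_sum_def by (intro sum.cong refl) auto
  also have "\<dots> = (\<Sum>x\<in>A. q (m - f x))"
    using sum.group[OF assms finite_imageI[OF assms], where g=f and h="\<lambda>x. q (m - f x)"] by simp
  finally show ?thesis .
qed

lemma lp_sum_dual: "lp_dual (lp_sum A f) = lp_sum A (\<lambda>x. - f x)"
proof
  fix m
  have "\<And>x. (f x = - m) = (- f x = m)" by (rule trans[OF equation_minus_iff eq_commute])
  then show "lp_dual (lp_sum A f) m = lp_sum A (\<lambda>x. - f x) m" unfolding lp_dual_def lp_sum_def by (simp only:)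
qed

lemma lp_sum_shift: "lp_shift c (lp_sum A f) = lp_sum A (\<lambda>x. f x + c)"
proof
  fix m
  have "\<And>x. (f x = m - c) = (f x + c = m)" by (rule eq_diff_eq)
  then show "lp_shift c (lp_sum A f) m = lp_sum A (\<lambda>x. f x + c) m" unfolding lp_shift_def lp_sum_def by (simp only:)
qed

lemma lp_sum_mul2: assumes "finite A" "finite B"
  shows "lp_mul (lp_sum A f) (lp_sum B g) = lp_sum (A \<times> B) (\<lambda>(x,y). f x + g y)"
proof
  fix m
  have "lp_mul (lp_sum A f) (lp_sum B g) m = (\<Sum>x\<in>A. \<Sum>y\<in>B. ind (g y = m - f x))"
    using assms by (simp add: lp_sum_mul lp_sum_eq)
  also have "\<dots> = (\<Sum>x\<in>A. \<Sum>y\<in>B. ind (f x + g y = m))"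
  proof (intro sum.cong refl)
    fix x y show "ind (g y = m - f x) = ind (f x + g y = m)"
      unfolding eq_diff_eq by (simp only: add.commute)
  qed
  also have "\<dots> = lp_sum (A \<times> B) (\<lambda>(x,y). f x + g y) m"
    using assms by (simp add: lp_sum_eq sum.cartesian_product split_def)
  finally show "lp_mul (lp_sum A f) (lp_sum B g) m = lp_sum (A \<times> B) (\<lambda>(x,y). f x + g y) m" .
qed

lemma lp_sum_add: assumes "finite A" "finite B"
  shows "lp_add (lp_sum A f) (lp_sum B g) = lp_sum (A <+> B) (case_sum f g)"
proof (rule ext)
  fix m show "lp_add (lp_sum A f) (lp_sum B g) m = lp_sum (A <+> B) (case_sum f g) m"
    using assms by (simp add: lp_add_def lp_sum_eq sum.Plus comp_def)
qed

lemma oms: assumes "x \<noteq> 0" "y \<noteq> 0"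
  shows "one_minus_sq x y m = ind (m = 0) - ind (m = x) - ind (m = y) + ind (m = x + y)"
proof -
  let ?P = "lp_sub (lp_mono 0) (lp_mono x)" and ?Q = "lp_sub (lp_mono 0) (lp_mono y)"
  have s: "lp_supp ?P = {0, x}"
    using assms unfolding lp_supp_def lp_sub_def lp_mono_def by auto
  have e: "one_minus_sq x y m = ?P 0 * ?Q (m - 0) + ?P x * ?Q (m - x)"
    unfolding one_minus_sq_def lp_mul_def s using assms by simp
  have p: "?P 0 = 1" "?P x = -1" using assms by (simp_all add: lp_sub_def lp_mono_def)
  have q1: "?Q (m - 0) = ind (m = 0) - ind (m = y)" by (simp add: lp_sub_def lp_mono_def ind_def)
  have q2: "?Q (m - x) = ind (m = x) - ind (m = x + y)"
  proof -
    have "(m - x = 0) = (m = x)" by simp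
    moreover have "(m - x = y) = (m = x + y)" by (metis add.commute diff_eq_eq)
    ultimately show ?thesis by (simp add: lp_sub_def lp_mono_def ind_def)
  qed
  show ?thesis unfolding e p q1 q2 by simp
qed

lemma sum_ind_eq: "finite W \<Longrightarrow> (\<Sum>w\<in>W. ind (w = a)) = ind (a \<in> W)"
  unfolding ind_def by (simp add: sum.delta')

lemma SW1: assumes "finite A" "finite W"
  shows "(\<Sum>w\<in>W. lp_sum A g w) = (\<Sum>x\<in>A. ind (g x \<in> W))"
proof -
  have "(\<Sum>w\<in>W. lp_sum A g w) = (\<Sum>w\<in>W. \<Sum>x\<in>A. ind (g x = w))"
    using assms by (simp add: lp_sum_eq)
  also have "\<dots> = (\<Sum>x\<in>A. \<Sum>w\<in>W. ind (w = g x))"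
    by (subst sum.swap) (simp add: eq_commute)
  also have "\<dots> = (\<Sum>x\<in>A. ind (g x \<in> W))"
    using assms by (simp add: sum_ind_eq)
  finally show ?thesis .
qed

definition Rs :: "mono \<Rightarrow> mono \<Rightarrow> mono set \<Rightarrow> mono \<Rightarrow> int" where
  "Rs x y W h = ind (h \<in> W) - ind (x + h \<in> W) - ind (y + h \<in> W) + ind (x + y + h \<in> W)"

lemma oms_shift: assumes "x \<noteq> 0" "y \<noteq> 0"
  shows "one_minus_sq x y (w - h) = ind (w = h) - ind (w = x + h) - ind (w = y + h) + ind (w = x + y + h)"
  unfolding oms[OF assms] by (simp add: diff_eq_eq)

lemma SW2: assumes "finite Z" "finite W" "x \<noteq> 0" "y \<noteq> 0"
  shows "(\<Sum>w\<in>W. \<Sum>z\<in>Z. one_minus_sq x y (w - h z)) = (\<Sum>z\<in>Z. Rs x y W (h z))"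
proof -
  have "(\<Sum>w\<in>W. \<Sum>z\<in>Z. one_minus_sq x y (w - h z)) = (\<Sum>z\<in>Z. \<Sum>w\<in>W. one_minus_sq x y (w - h z))"
    by (rule sum.swap)
  also have "\<dots> = (\<Sum>z\<in>Z. Rs x y W (h z))"
    unfolding oms_shift[OF assms(3,4)] Rs_def
    using assms(2) by (simp add: sum.distrib sum_subtractf sum_ind_eq)
  finally show ?thesis .
qed

lemma oms_supp: assumes "x \<noteq> 0" "y \<noteq> 0" "(\<Sum>z\<in>Z. one_minus_sq x y (w - h z)) \<noteq> 0"
  shows "w \<in> h ` Z \<union> (\<lambda>z. x + h z) ` Z \<union> (\<lambda>z. y + h z) ` Z \<union> (\<lambda>z. x + y + h z) ` Z"
proof -
  obtain z where z: "z \<in> Z" "one_minus_sq x y (w - h z) \<noteq> 0"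
    using assms(3) by (meson sum.neutral)
  then have "w = h z \<or> w = x + h z \<or> w = y + h z \<or> w = x + y + h z"
    unfolding oms_shift[OF assms(1,2)] ind_def by (auto split: if_splits)
  then show ?thesis using z(1) by blast
qed

lemma theta_generic:
  fixes T :: lpoly
  assumes T: "\<And>m. T m = lp_sum A1 g1 m + lp_sum A1 g2 m - (\<Sum>z\<in>Z1. one_minus_sq x1 y1 (m - h1 z))
      + lp_sum A2 g4 m + lp_sum A2 g5 m - (\<Sum>z\<in>Z2. one_minus_sq x2 y2 (m - h2 z)) + lp_sum A7 g7 m"
    and fin: "finite A1" "finite Z1" "finite A2" "finite Z2" "finite A7"
    and nz: "x1 \<noteq> 0" "y1 \<noteq> 0" "x2 \<noteq> 0" "y2 \<noteq> 0"
  shows "finite (lp_supp T) \<and> (\<Sum>w\<in>lp_supp T \<inter> D. T w) =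
     (\<Sum>a\<in>A1. ind (g1 a \<in> D)) + (\<Sum>a\<in>A1. ind (g2 a \<in> D)) - (\<Sum>z\<in>Z1. Rs x1 y1 D (h1 z))
     + (\<Sum>a\<in>A2. ind (g4 a \<in> D)) + (\<Sum>a\<in>A2. ind (g5 a \<in> D)) - (\<Sum>z\<in>Z2. Rs x2 y2 D (h2 z))
     + (\<Sum>a\<in>A7. ind (g7 a \<in> D))"
proof -
  define F where "F = g1 ` A1 \<union> g2 ` A1 \<union> (h1 ` Z1 \<union> (\<lambda>z. x1 + h1 z) ` Z1 \<union> (\<lambda>z. y1 + h1 z) ` Z1 \<union> (\<lambda>z. x1 + y1 + h1 z) ` Z1)
     \<union> g4 ` A2 \<union> g5 ` A2 \<union> (h2 ` Z2 \<union> (\<lambda>z. x2 + h2 z) ` Z2 \<union> (\<lambda>z. y2 + h2 z) ` Z2 \<union> (\<lambda>z. x2 + y2 + h2 z) ` Z2)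
     \<union> g7 ` A7"
  have finF: "finite F" unfolding F_def using fin by simp
  have supp: "lp_supp T \<subseteq> F"
  proof
    fix w assume "w \<in> lp_supp T"
    then have "T w \<noteq> 0" unfolding lp_supp_def by simp
    then have "lp_sum A1 g1 w \<noteq> 0 \<or> lp_sum A1 g2 w \<noteq> 0 \<or> (\<Sum>z\<in>Z1. one_minus_sq x1 y1 (w - h1 z)) \<noteq> 0
      \<or> lp_sum A2 g4 w \<noteq> 0 \<or> lp_sum A2 g5 w \<noteq> 0 \<or> (\<Sum>z\<in>Z2. one_minus_sq x2 y2 (w - h2 z)) \<noteq> 0
      \<or> lp_sum A7 g7 w \<noteq> 0" unfolding T by linarith
    moreover have hh: "\<And>A g. lp_sum A g w \<noteq> 0 \<Longrightarrow> w \<in> g ` A"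
      using lp_sum_supp unfolding lp_supp_def by blast
    ultimately show "w \<in> F" unfolding F_def using hh[of A1 g1] hh[of A1 g2] hh[of A2 g4] hh[of A2 g5] hh[of A7 g7] oms_supp[OF nz(1,2), where Z=Z1 and w=w and h=h1] oms_supp[OF nz(3,4), where Z=Z2 and w=w and h=h2]
      by blast
  qed
  have finS: "finite (lp_supp T)" using supp finF finite_subset by blast
  have "(\<Sum>w\<in>lp_supp T \<inter> D. T w) = (\<Sum>w\<in>F \<inter> D. T w)"
    by (rule sum.mono_neutral_left) (use finF supp in \<open>auto simp: lp_supp_def\<close>)
  also have "\<dots> = (\<Sum>w\<in>F \<inter> D. lp_sum A1 g1 w) + (\<Sum>w\<in>F \<inter> D. lp_sum A1 g2 w) - (\<Sum>w\<in>F \<inter> D. \<Sum>z\<in>Z1. one_minus_sq x1 y1 (w - h1 z))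
      + (\<Sum>w\<in>F \<inter> D. lp_sum A2 g4 w) + (\<Sum>w\<in>F \<inter> D. lp_sum A2 g5 w) - (\<Sum>w\<in>F \<inter> D. \<Sum>z\<in>Z2. one_minus_sq x2 y2 (w - h2 z)) + (\<Sum>w\<in>F \<inter> D. lp_sum A7 g7 w)"
    unfolding T by (simp add: sum.distrib sum_subtractf)
  also have "\<dots> = (\<Sum>a\<in>A1. ind (g1 a \<in> F \<inter> D)) + (\<Sum>a\<in>A1. ind (g2 a \<in> F \<inter> D)) - (\<Sum>z\<in>Z1. Rs x1 y1 (F \<inter> D) (h1 z))
     + (\<Sum>a\<in>A2. ind (g4 a \<in> F \<inter> D)) + (\<Sum>a\<in>A2. ind (g5 a \<in> F \<inter> D)) - (\<Sum>z\<in>Z2. Rs x2 y2 (F \<inter> D) (h2 z))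
     + (\<Sum>a\<in>A7. ind (g7 a \<in> F \<inter> D))"
    using finF fin nz by (simp add: SW1 SW2)
  also have "\<dots> = (\<Sum>a\<in>A1. ind (g1 a \<in> D)) + (\<Sum>a\<in>A1. ind (g2 a \<in> D)) - (\<Sum>z\<in>Z1. Rs x1 y1 D (h1 z))
     + (\<Sum>a\<in>A2. ind (g4 a \<in> D)) + (\<Sum>a\<in>A2. ind (g5 a \<in> D)) - (\<Sum>z\<in>Z2. Rs x2 y2 D (h2 z))
     + (\<Sum>a\<in>A7. ind (g7 a \<in> D))"
  proof -
    have e1: "\<And>a. a \<in> A1 \<Longrightarrow> ind (g1 a \<in> F \<inter> D) = ind (g1 a \<in> D)" "\<And>a. a \<in> A1 \<Longrightarrow> ind (g2 a \<in> F \<inter> D) = ind (g2 a \<in> D)"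
      "\<And>a. a \<in> A2 \<Longrightarrow> ind (g4 a \<in> F \<inter> D) = ind (g4 a \<in> D)" "\<And>a. a \<in> A2 \<Longrightarrow> ind (g5 a \<in> F \<inter> D) = ind (g5 a \<in> D)"
      "\<And>a. a \<in> A7 \<Longrightarrow> ind (g7 a \<in> F \<inter> D) = ind (g7 a \<in> D)"
      "\<And>z. z \<in> Z1 \<Longrightarrow> Rs x1 y1 (F \<inter> D) (h1 z) = Rs x1 y1 D (h1 z)"
      "\<And>z. z \<in> Z2 \<Longrightarrow> Rs x2 y2 (F \<inter> D) (h2 z) = Rs x2 y2 D (h2 z)"
      unfolding F_def Rs_def by auto
    show ?thesis using e1 by (simp cong: sum.cong)
  qed
  finally show ?thesis using finS by simp
qed

definition isD :: "mono \<Rightarrow> bool" where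
  "isD w \<longleftrightarrow> fst w = 0 \<and> fst (snd w) = 0 \<and> fst (snd (snd w)) = fst (snd (snd (snd w))) \<and> snd (snd (snd (snd w))) = 0"
definition "Dset = {w. isD w}"

definition f1 :: "nat \<times> nat \<Rightarrow> mono" where "f1 = (\<lambda>(i,j). (- int i, - int j, 0, 0, 0))"
definition f0 :: "nat \<times> nat \<Rightarrow> mono" where "f0 = (\<lambda>(k,l). (0, 0, - int k, - int l, 0))"
definition fS :: "(nat \<times> nat) \<times> (nat \<times> nat) \<Rightarrow> mono" where
  "fS = (\<lambda>((i,j),(k,l)). (- int i, - int j, - int k, - int l, -1))"
definition "f2 = case_sum f0 fS"

lemma Tvir_form:
  assumes "finite Y1" "finite Y0" "\<forall>b\<in>Y1. finite (Y2 b)"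
  defines "A2 \<equiv> Y0 <+> (SIGMA b:Y1. Y2 b)"
  shows "Tvir (Y1, Y0, Y2) m = lp_sum Y1 f1 m + lp_sum Y1 (\<lambda>x. - f1 x + (m_r1 + m_r2)) m
     - (\<Sum>z\<in>Y1 \<times> Y1. one_minus_sq m_r1 m_r2 (m - (case z of (x,y) \<Rightarrow> f1 x + - f1 y)))
     + lp_sum A2 f2 m + lp_sum A2 (\<lambda>x. - f2 x + (m_s1 + m_s2)) m
     - (\<Sum>z\<in>A2 \<times> A2. one_minus_sq m_s1 m_s2 (m - (case z of (x,y) \<Rightarrow> f2 x + - f2 y)))
     + lp_sum (A2 \<times> Y1) (\<lambda>z. (case z of (x,y) \<Rightarrow> f2 x + - f1 y) + m_t) m"
proof -
  have fA2: "finite A2" unfolding A2_def using assms(2,1,3) by auto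
  have V1: "V1_of (Y1, Y0, Y2) = lp_sum Y1 f1" unfolding V1_of_def f1_def by simp
  have V2: "V2_of (Y1, Y0, Y2) = lp_sum A2 f2" unfolding V2_of_def f2_def A2_def
    using assms(1,2,3) by (simp add: lp_sum_add f0_def fS_def split_def)
  show ?thesis unfolding Tvir_def Let_def V1 V2
    using assms(1) fA2 by (simp add: lp_sum_dual lp_sum_shift lp_sum_mul2 lp_sum_mul)
qed

lemma "Rs m_s1 m_s2 Dset (f0 p + - fS q) = 0"
  by (cases p; cases q) (auto simp: Rs_def Dset_def isD_def f0_def fS_def ind_def)

definition dg :: "(nat \<times> nat) set \<Rightarrow> int" where "dg Y = (\<Sum>p\<in>Y. ind (fst p = snd p))"
definition GG :: "(nat \<times> nat) set \<Rightarrow> int" where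
  "GG Y = (\<Sum>p\<in>Y. \<Sum>p'\<in>Y. Rs m_s1 m_s2 Dset (f0 p + - f0 p'))"
definition G0 :: "(nat \<times> nat) set \<Rightarrow> int" where
  "G0 Y = (\<Sum>z\<in>Y \<times> Y. Rs m_r1 m_r2 Dset (case z of (x,y) \<Rightarrow> f1 x + - f1 y))"

lemma P1: "finite Y1 \<Longrightarrow> (\<Sum>a\<in>Y1. ind (f1 a \<in> Dset)) = ind ((0,0) \<in> Y1)"
proof -
  assume f: "finite Y1"
  have "\<And>a. ind (f1 a \<in> Dset) = ind (a = (0,0))" by (auto simp: f1_def Dset_def isD_def ind_def split: prod.splits)
  then show ?thesis using f by (simp add: sum_ind_eq[symmetric] eq_commute)
qed

lemma P2: "(\<Sum>a\<in>Y1. ind (- f1 a + (m_r1 + m_r2) \<in> Dset)) = 0"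
  by (rule sum.neutral) (auto simp: f1_def Dset_def isD_def ind_def split: prod.splits)

lemma P4: assumes "finite Y0" "finite S"
  shows "(\<Sum>a\<in>Y0 <+> S. ind (f2 a \<in> Dset)) = dg Y0"
proof -
  have "(\<Sum>a\<in>S. ind (fS a \<in> Dset)) = 0"
    by (rule sum.neutral) (auto simp: fS_def Dset_def isD_def ind_def split: prod.splits)
  moreover have "\<And>a. ind (f0 a \<in> Dset) = ind (fst a = snd a)"
    by (auto simp: f0_def Dset_def isD_def ind_def split: prod.splits)
  ultimately show ?thesis using assms by (simp add: sum.Plus f2_def comp_def dg_def)
qed

lemma P5: assumes "finite Y0" "finite S"
  shows "(\<Sum>a\<in>Y0 <+> S. ind (- f2 a + (m_s1 + m_s2) \<in> Dset)) = dg Y0"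
proof -
  have "(\<Sum>a\<in>S. ind (- fS a + (m_s1 + m_s2) \<in> Dset)) = 0"
    by (rule sum.neutral) (auto simp: fS_def Dset_def isD_def ind_def split: prod.splits)
  moreover have "\<And>a. ind (- f0 a + (m_s1 + m_s2) \<in> Dset) = ind (fst a = snd a)"
    by (auto simp: f0_def Dset_def isD_def ind_def split: prod.splits)
  ultimately show ?thesis using assms by (simp add: sum.Plus f2_def comp_def dg_def)
qed

lemma P7: assumes "finite Y0" "finite Y1" "\<forall>b\<in>Y1. finite (Y2 b)"
  shows "(\<Sum>z\<in>(Y0 <+> (SIGMA b:Y1. Y2 b)) \<times> Y1. ind ((case z of (x,y) \<Rightarrow> f2 x + - f1 y) + m_t \<in> Dset))
     = (\<Sum>b\<in>Y1. dg (Y2 b))"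
proof -
  let ?S = "SIGMA b:Y1. Y2 b"
  have fS: "finite ?S" using assms by auto
  have "(\<Sum>z\<in>(Y0 <+> ?S) \<times> Y1. ind ((case z of (x,y) \<Rightarrow> f2 x + - f1 y) + m_t \<in> Dset))
     = (\<Sum>x\<in>Y0 <+> ?S. \<Sum>y\<in>Y1. ind (f2 x + - f1 y + m_t \<in> Dset))"
    by (simp only: sum.cartesian_product' prod.case)
  also have "\<dots> = (\<Sum>x\<in>Y0. \<Sum>y\<in>Y1. ind (f0 x + - f1 y + m_t \<in> Dset)) + (\<Sum>x\<in>?S. \<Sum>y\<in>Y1. ind (fS x + - f1 y + m_t \<in> Dset))"
    using assms fS by (simp add: sum.Plus f2_def comp_def)
  also have "(\<Sum>x\<in>Y0. \<Sum>y\<in>Y1. ind (f0 x + - f1 y + m_t \<in> Dset)) = 0"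
    by (intro sum.neutral ballI) (auto simp: f0_def f1_def Dset_def isD_def ind_def split: prod.splits)
  also have "(\<Sum>x\<in>?S. \<Sum>y\<in>Y1. ind (fS x + - f1 y + m_t \<in> Dset)) = (\<Sum>x\<in>?S. \<Sum>y\<in>Y1. if y = fst x then ind (fst (snd x) = snd (snd x)) else 0)"
    by (intro sum.cong refl) (auto simp: fS_def f1_def Dset_def isD_def ind_def split: prod.splits)
  also have "\<dots> = (\<Sum>x\<in>?S. ind (fst (snd x) = snd (snd x)))"
    using assms(2) by (intro sum.cong refl) (auto simp: sum.delta)
  also have "\<dots> = (\<Sum>b\<in>Y1. dg (Y2 b))"
    unfolding dg_def using assms by (simp add: sum.Sigma case_prod_unfold)
  finally show ?thesis by simp
qed

lemma sum_Sigma': "finite A \<Longrightarrow> \<forall>x\<in>A. finite (B x) \<Longrightarrow> (\<Sum>z\<in>Sigma A B. F z) = (\<Sum>x\<in>A. \<Sum>y\<in>B x. F (x,y))"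
  by (simp add: sum.Sigma)

lemma Rs_gen: "Rs m_s1 m_s2 Dset (a,b,c,d,e) = (if a = 0 \<and> b = 0 \<and> e = 0 then Rs m_s1 m_s2 Dset (0,0,c,d,0) else 0)"
  by (simp add: Rs_def Dset_def isD_def ind_def)

lemma fS_diff: "\<exists>c d. fS (b,p) + - fS (b',p') = (int (fst b') - int (fst b), int (snd b') - int (snd b), c, d, 0)
   \<and> f0 p + - f0 p' = (0, 0, c, d, 0)"
  by (cases b; cases b'; cases p; cases p') (simp add: fS_def f0_def)

lemma Rs_fS: "Rs m_s1 m_s2 Dset (fS (b,p) + - fS (b',p')) = (if b' = b then Rs m_s1 m_s2 Dset (f0 p + - f0 p') else 0)"
proof -
  obtain c d where cd: "fS (b,p) + - fS (b',p') = (int (fst b') - int (fst b), int (snd b') - int (snd b), c, d, 0)"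
     "f0 p + - f0 p' = (0, 0, c, d, 0)" using fS_diff by blast
  have "(int (fst b') - int (fst b) = 0 \<and> int (snd b') - int (snd b) = 0) = (b' = b)"
    by (cases b; cases b') auto
  then show ?thesis unfolding cd by (subst Rs_gen) simp
qed

lemma Rs_f0fS: "Rs m_s1 m_s2 Dset (f0 p + - fS q) = 0" "Rs m_s1 m_s2 Dset (fS q + - f0 p) = 0"
  by (cases p; cases q; simp add: f0_def fS_def Rs_gen split: prod.splits)+

lemma P6: assumes "finite Y0" "finite Y1" "\<forall>b\<in>Y1. finite (Y2 b)"
  shows "(\<Sum>z\<in>(Y0 <+> (SIGMA b:Y1. Y2 b)) \<times> (Y0 <+> (SIGMA b:Y1. Y2 b)). Rs m_s1 m_s2 Dset (case z of (x,y) \<Rightarrow> f2 x + - f2 y))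
     = GG Y0 + (\<Sum>b\<in>Y1. GG (Y2 b))"
proof -
  let ?S = "SIGMA b:Y1. Y2 b"
  let ?R = "Rs m_s1 m_s2 Dset"
  have fS: "finite ?S" using assms by auto
  have "(\<Sum>z\<in>(Y0 <+> ?S) \<times> (Y0 <+> ?S). ?R (case z of (x,y) \<Rightarrow> f2 x + - f2 y))
     = (\<Sum>x\<in>Y0 <+> ?S. \<Sum>y\<in>Y0 <+> ?S. ?R (f2 x + - f2 y))"
    by (simp only: sum.cartesian_product' prod.case)
  also have "\<dots> = (\<Sum>x\<in>Y0. \<Sum>y\<in>Y0. ?R (f0 x + - f0 y)) + (\<Sum>x\<in>Y0. \<Sum>y\<in>?S. ?R (f0 x + - fS y))
      + ((\<Sum>x\<in>?S. \<Sum>y\<in>Y0. ?R (fS x + - f0 y)) + (\<Sum>x\<in>?S. \<Sum>y\<in>?S. ?R (fS x + - fS y)))"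
    using assms fS by (simp add: sum.Plus f2_def comp_def sum.distrib)
  also have "(\<Sum>x\<in>Y0. \<Sum>y\<in>?S. ?R (f0 x + - fS y)) = 0"
    by (simp only: Rs_f0fS sum.neutral_const)
  also have "(\<Sum>x\<in>?S. \<Sum>y\<in>Y0. ?R (fS x + - f0 y)) = 0"
    by (simp only: Rs_f0fS sum.neutral_const)
  also have "(\<Sum>x\<in>?S. \<Sum>y\<in>?S. ?R (fS x + - fS y)) = (\<Sum>x\<in>?S. \<Sum>p\<in>Y2 (fst x). ?R (f0 (snd x) + - f0 p))"
  proof (intro sum.cong refl)
    fix x assume x: "x \<in> ?S"
    have "(\<Sum>y\<in>?S. ?R (fS x + - fS y)) = (\<Sum>b\<in>Y1. \<Sum>p\<in>Y2 b. ?R (fS x + - fS (b,p)))"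
      using assms(2,3) by (rule sum_Sigma')
    also have "\<dots> = (\<Sum>b\<in>Y1. if b = fst x then (\<Sum>p\<in>Y2 b. ?R (f0 (snd x) + - f0 p)) else 0)"
    proof (intro sum.cong refl)
      fix b show "(\<Sum>p\<in>Y2 b. ?R (fS x + - fS (b,p))) = (if b = fst x then (\<Sum>p\<in>Y2 b. ?R (f0 (snd x) + - f0 p)) else 0)"
        using Rs_fS[of "fst x" "snd x" b] by simp
    qed
    also have "\<dots> = (\<Sum>p\<in>Y2 (fst x). ?R (f0 (snd x) + - f0 p))"
      using x assms(2) by (auto simp: sum.delta')
    finally show "(\<Sum>y\<in>?S. ?R (fS x + - fS y)) = (\<Sum>p\<in>Y2 (fst x). ?R (f0 (snd x) + - f0 p))" .
  qed
  also have "\<dots> = (\<Sum>b\<in>Y1. GG (Y2 b))"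
    unfolding GG_def using assms by (simp add: sum_Sigma')
  finally show ?thesis by (simp add: GG_def)
qed

lemma tele: fixes n :: "nat \<Rightarrow> int"
  shows "a \<le> b \<Longrightarrow> \<bar>n a - n b\<bar> \<le> (\<Sum>k\<in>{a..<b}. \<bar>n k - n (Suc k)\<bar>)"
proof (induction b)
  case 0 then show ?case by simp
next
  case (Suc b)
  show ?case
  proof (cases "a = Suc b")
    case True then show ?thesis by simp
  next
    case False
    then have "a \<le> b" using Suc.prems by simp
    then have "\<bar>n a - n b\<bar> \<le> (\<Sum>k\<in>{a..<b}. \<bar>n k - n (Suc k)\<bar>)" by (rule Suc.IH)
    moreover have "(\<Sum>k\<in>{a..<Suc b}. \<bar>n k - n (Suc k)\<bar>) = (\<Sum>k\<in>{a..<b}. \<bar>n k - n (Suc k)\<bar>) + \<bar>n b - n (Suc b)\<bar>"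
      using \<open>a \<le> b\<close> by simp
    ultimately show ?thesis by linarith
  qed
qed

lemma QS: fixes n :: "nat \<Rightarrow> int"
  shows "(\<Sum>a<N. (n a - n (Suc a))^2) = (\<Sum>a<N. n a * (2 * n a - n (a - 1) - n (Suc a))) + (n N)^2 - n N * n (N - 1) - (n 0)^2 + n 0 * n 0"
proof (induction N)
  case 0 then show ?case by simp
next
  case (Suc N) then show ?case by (simp add: power2_eq_square algebra_simps)
qed

lemma quad: fixes n :: "nat \<Rightarrow> int"
  assumes "n 0 = 0" "n N = 0" "L < N"
  shows "2 * \<bar>n L\<bar> \<le> (\<Sum>a<N. n a * (2 * n a - n (a - 1) - n (Suc a)))"
proof -
  have Q: "(\<Sum>a<N. n a * (2 * n a - n (a - 1) - n (Suc a))) = (\<Sum>a<N. (n a - n (Suc a))^2)"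
    using QS[of n N] assms by simp
  have "(\<Sum>a<N. \<bar>n a - n (Suc a)\<bar>) \<le> (\<Sum>a<N. (n a - n (Suc a))^2)"
  proof (rule sum_mono)
    fix a
    show "\<bar>n a - n (Suc a)\<bar> \<le> (n a - n (Suc a))^2"
    proof (cases "n a - n (Suc a) = 0")
      case True then show ?thesis by simp
    next
      case False
      then have "1 \<le> \<bar>n a - n (Suc a)\<bar>" by linarith
      then have "\<bar>n a - n (Suc a)\<bar> * 1 \<le> \<bar>n a - n (Suc a)\<bar> * \<bar>n a - n (Suc a)\<bar>"
        by (intro mult_left_mono) auto
      then show ?thesis by (simp add: power2_eq_square abs_mult[symmetric])
    qed
  qed
  moreover have "(\<Sum>a<N. \<bar>n a - n (Suc a)\<bar>) = (\<Sum>a\<in>{0..<L}. \<bar>n a - n (Suc a)\<bar>) + (\<Sum>a\<in>{L..<N}. \<bar>n a - n (Suc a)\<bar>)"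
    using assms(3) by (simp add: sum.atLeastLessThan_concat lessThan_atLeast0)
  moreover have "\<bar>n 0 - n L\<bar> \<le> (\<Sum>a\<in>{0..<L}. \<bar>n a - n (Suc a)\<bar>)" by (rule tele) simp
  moreover have "\<bar>n L - n N\<bar> \<le> (\<Sum>a\<in>{L..<N}. \<bar>n a - n (Suc a)\<bar>)" by (rule tele) (use assms in simp)
  ultimately show ?thesis using Q assms by simp
qed

lemma group_sum: fixes cc :: "'a \<Rightarrow> nat"
  assumes "finite Y" "cc ` Y \<subseteq> {..<N}"
  shows "(\<Sum>p\<in>Y. \<phi> (cc p)) = (\<Sum>a<N. (\<Sum>p\<in>Y. ind (cc p = a)) * \<phi> a)"
proof -
  have "(\<Sum>p\<in>Y. \<phi> (cc p)) = (\<Sum>a<N. \<Sum>p\<in>{p\<in>Y. cc p = a}. \<phi> (cc p))"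
    using sum.group[OF assms(1) _ assms(2), where h="\<lambda>p. \<phi> (cc p)"] by simp
  also have "\<dots> = (\<Sum>a<N. (\<Sum>p\<in>Y. ind (cc p = a)) * \<phi> a)"
  proof (intro sum.cong refl)
    fix a
    have "(\<Sum>p\<in>{p\<in>Y. cc p = a}. \<phi> (cc p)) = (\<Sum>p\<in>{p\<in>Y. cc p = a}. \<phi> a)" by simp
    also have "\<dots> = int (card {p\<in>Y. cc p = a}) * \<phi> a" by simp
    finally show "(\<Sum>p\<in>{p\<in>Y. cc p = a}. \<phi> (cc p)) = (\<Sum>p\<in>Y. ind (cc p = a)) * \<phi> a"
      using card_ind[OF assms(1)] by simp
  qed
  finally show ?thesis .
qed

lemma sum_mult_ind: "(\<Sum>a'<(N::nat). (n a' :: int) * ind (a' = b)) = (if b < N then n b else 0)"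
proof -
  have "\<And>a'. n a' * ind (a' = b) = (if a' = b then n a' else 0)" by (simp add: ind_def)
  then show ?thesis by (simp add: sum.delta)
qed

definition Wn :: "nat \<Rightarrow> nat \<Rightarrow> int" where
  "Wn a a' = 2 * ind (a = a') - ind (a = Suc a') - ind (a' = Suc a)"

lemma double_group: fixes cc :: "'a \<Rightarrow> nat"
  assumes "finite Y" "cc ` Y \<subseteq> {..<N}"
  defines "n \<equiv> \<lambda>a. (\<Sum>p\<in>Y. ind (cc p = a))"
  assumes n0: "n 0 = 0" and nN: "n N = 0" and L: "L < N"
  shows "2 * \<bar>n L\<bar> \<le> (\<Sum>p\<in>Y. \<Sum>p'\<in>Y. Wn (cc p) (cc p'))"
proof -
  have "(\<Sum>p\<in>Y. \<Sum>p'\<in>Y. Wn (cc p) (cc p')) = (\<Sum>p\<in>Y. \<Sum>a'<N. n a' * Wn (cc p) a')"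
    unfolding n_def by (intro sum.cong refl group_sum[OF assms(1,2)])
  also have "\<dots> = (\<Sum>a<N. n a * (\<Sum>a'<N. n a' * Wn a a'))"
    unfolding n_def by (rule group_sum[OF assms(1,2)])
  also have "\<dots> = (\<Sum>a<N. n a * (2 * n a - n (a - 1) - n (Suc a)))"
  proof (intro sum.cong refl)
    fix a assume a: "a \<in> {..<N}"
    have "(\<Sum>a'<N. n a' * Wn a a') = 2 * (\<Sum>a'<N. n a' * ind (a' = a)) - (\<Sum>a'<N. n a' * ind (Suc a' = a)) - (\<Sum>a'<N. n a' * ind (a' = Suc a))"
      unfolding Wn_def by (simp add: algebra_simps sum.distrib sum_subtractf sum_distrib_left eq_commute)
    also have "(\<Sum>a'<N. n a' * ind (a' = a)) = n a"
      using a by (simp add: sum_mult_ind)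
    also have "(\<Sum>a'<N. n a' * ind (Suc a' = a)) = n (a - 1)"
    proof (cases a)
      case 0 then show ?thesis using n0 by (simp add: ind_def)
    next
      case (Suc b) then show ?thesis using a sum_mult_ind[where N=N and n=n and b=b] by simp
    qed
    also have "(\<Sum>a'<N. n a' * ind (a' = Suc a)) = n (Suc a)"
    proof (cases "Suc a < N")
      case True then show ?thesis by (simp add: sum_mult_ind)
    next
      case False then have "Suc a = N" using a by simp
      then show ?thesis using nN by (simp add: ind_def)
    qed
    finally show "n a * (\<Sum>a'<N. n a' * Wn a a') = n a * (2 * n a - n (a - 1) - n (Suc a))" by simp
  qed
  finally show ?thesis using quad[of n N L] n0 nN L by simp
qed

lemma Rs_f0_Wn:
  assumes "snd p < L" "snd p' < L"
  shows "Rs m_s1 m_s2 Dset (f0 p + - f0 p') = Wn (fst p + L - snd p) (fst p' + L - snd p')"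
proof -
  obtain k l k' l' where pp: "p = (k,l)" "p' = (k',l')" by fastforce
  have l: "l < L" "l' < L" using assms pp by auto
  have e1: "(int k' - int k = int l' - int l) = (k + L - l = k' + L - l')" using l by linarith
  have e2: "(1 + (int k' - int k) = int l' - int l) = (k + L - l = Suc (k' + L - l'))" using l by linarith
  have e3: "(int k' - int k = 1 + (int l' - int l)) = (k' + L - l' = Suc (k + L - l))" using l by linarith
  have e4: "(1 + (int k' - int k) = 1 + (int l' - int l)) = (k + L - l = k' + L - l')" using l by linarith
  show ?thesis unfolding pp Rs_def Wn_def Dset_def
    using l by (auto simp: isD_def f0_def ind_def)
qed

lemma GG_ge: assumes "finite Y" shows "2 * dg Y \<le> GG Y"
proof -
  define L where "L = Suc (\<Sum>p\<in>Y. snd p)"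
  define N where "N = (\<Sum>p\<in>Y. fst p) + L + 1"
  define cc where "cc = (\<lambda>p::nat\<times>nat. fst p + L - snd p)"
  have sndL: "\<And>p. p \<in> Y \<Longrightarrow> snd p < L"
    unfolding L_def using member_le_sum[OF _ _ assms, of _ snd] by (simp add: le_imp_less_Suc)
  have fstN: "\<And>p. p \<in> Y \<Longrightarrow> fst p \<le> (\<Sum>p\<in>Y. fst p)"
    using member_le_sum[OF _ _ assms, of _ fst] by simp
  have ccN: "cc ` Y \<subseteq> {..<N}"
    unfolding cc_def N_def using fstN by fastforce
  define n where "n = (\<lambda>a. (\<Sum>p\<in>Y. ind (cc p = a)))"
  have n0: "n 0 = 0" unfolding n_def
  proof (rule sum.neutral, rule ballI)
    fix p assume "p \<in> Y" then have "snd p < L" using sndL by auto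
    then show "ind (cc p = 0) = 0" by (simp add: ind_def cc_def)
  qed
  have nN: "n N = 0" unfolding n_def
  proof (rule sum.neutral, rule ballI)
    fix p assume "p \<in> Y" then have "cc p < N" using ccN by auto
    then show "ind (cc p = N) = 0" by (simp add: ind_def)
  qed
  have LN: "L < N" unfolding N_def by simp
  have "2 * \<bar>n L\<bar> \<le> (\<Sum>p\<in>Y. \<Sum>p'\<in>Y. Wn (cc p) (cc p'))"
    using double_group[OF assms ccN _ _ LN] n0 nN unfolding n_def by blast
  also have "\<dots> = GG Y" unfolding GG_def cc_def
    by (intro sum.cong refl) (rule Rs_f0_Wn[symmetric]; simp add: sndL)
  finally have *: "2 * \<bar>n L\<bar> \<le> GG Y" .
  have "n L = dg Y" unfolding n_def dg_def cc_def
  proof (intro sum.cong refl)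
    fix p assume "p \<in> Y" then have "snd p < L" using sndL by auto
    then have "(fst p + L - snd p = L) = (fst p = snd p)" by linarith
    then show "ind (fst p + L - snd p = L) = ind (fst p = snd p)" by simp
  qed
  with * show ?thesis by simp
qed

lemma young00: "young Y \<Longrightarrow> Y \<noteq> {} \<Longrightarrow> (0,0) \<in> Y"
  unfolding young_def by fastforce

lemma dg_nonneg: "0 \<le> dg Y"
  unfolding dg_def ind_def by (rule sum_nonneg) simp

lemma dg_pos: assumes "young Y" "Y \<noteq> {}" shows "1 \<le> dg Y"
proof -
  have "(0,0) \<in> Y" "finite Y" using young00 assms young_def by auto
  then have "ind (fst (0::nat,0::nat) = snd (0::nat,0::nat)) \<le> dg Y"
    unfolding dg_def by (intro member_le_sum) (auto simp: ind_def)
  then show ?thesis by (simp add: ind_def)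
qed

lemma sum_ind_conj: "finite Y \<Longrightarrow> (\<Sum>y\<in>Y. ind (P \<and> y = z)) = ind (P \<and> z \<in> Y)"
  by (cases P) (simp_all add: sum_ind_eq ind_def)

lemma Rs_f1: "Rs m_r1 m_r2 Dset (f1 x + - f1 y) = ind (y = x) - ind (1 \<le> fst x \<and> y = (fst x - 1, snd x))
   - ind (1 \<le> snd x \<and> y = (fst x, snd x - 1)) + ind (1 \<le> fst x \<and> 1 \<le> snd x \<and> y = (fst x - 1, snd x - 1))"
proof -
  obtain a1 a2 b1 b2 where xy: "x = (a1,a2)" "y = (b1,b2)" by fastforce
  have e5: "(1 + (int b1 - int a1) = 0) = (Suc 0 \<le> a1 \<and> b1 = a1 - Suc 0)" by auto
  have e6: "(1 + (int b2 - int a2) = 0) = (Suc 0 \<le> a2 \<and> b2 = a2 - Suc 0)" by auto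
  show ?thesis unfolding xy Rs_def Dset_def
    by (simp add: isD_def f1_def e5 e6 conj_commute conj_left_commute)
qed

lemma G0_young: assumes "young Y" shows "G0 Y = ind ((0,0) \<in> Y)"
proof -
  have fin: "finite Y" using assms young_def by auto
  have "G0 Y = (\<Sum>x\<in>Y. \<Sum>y\<in>Y. Rs m_r1 m_r2 Dset (f1 x + - f1 y))"
    unfolding G0_def by (simp only: sum.cartesian_product' prod.case)
  also have "\<dots> = (\<Sum>x\<in>Y. ind (x = (0,0)))"
  proof (intro sum.cong refl)
    fix x assume x: "x \<in> Y"
    obtain a b where ab: "x = (a,b)" by fastforce
    have m1: "1 \<le> a \<Longrightarrow> (a - 1, b) \<in> Y" using assms x ab unfolding young_def by (meson diff_le_self le_refl)
    have m2: "1 \<le> b \<Longrightarrow> (a, b - 1) \<in> Y" using assms x ab unfolding young_def by (meson diff_le_self le_refl)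
    have m3: "1 \<le> a \<Longrightarrow> 1 \<le> b \<Longrightarrow> (a - 1, b - 1) \<in> Y" using assms x ab unfolding young_def by (meson diff_le_self)
    have "(\<Sum>y\<in>Y. Rs m_r1 m_r2 Dset (f1 x + - f1 y)) = ind (x \<in> Y) - ind (1 \<le> a \<and> (a - 1, b) \<in> Y)
       - ind (1 \<le> b \<and> (a, b - 1) \<in> Y) + ind (1 \<le> a \<and> 1 \<le> b \<and> (a - 1, b - 1) \<in> Y)"
      unfolding Rs_f1 ab using fin
      by (simp add: sum.distrib sum_subtractf sum_ind_eq sum_ind_conj conj_assoc[symmetric] del: conj_assoc)
    also have "\<dots> = ind (x = (0,0))"
      using m1 m2 m3 x unfolding ab by (cases "1 \<le> a"; cases "1 \<le> b") (auto simp: ind_def)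
    finally show "(\<Sum>y\<in>Y. Rs m_r1 m_r2 Dset (f1 x + - f1 y)) = ind (x = (0,0))" .
  qed
  also have "\<dots> = ind ((0,0) \<in> Y)" using fin by (simp add: sum_ind_eq)
  finally show ?thesis .
qed

lemma theta_fp:
  assumes p: "(Y1, Y0, Y2) \<in> fixed_points M1 M2 - ring_fixed_points M1 M2"
  shows "finite (lp_supp (Tvir (Y1, Y0, Y2))) \<and> (\<Sum>w\<in>lp_supp (Tvir (Y1, Y0, Y2)) \<inter> Dset. Tvir (Y1, Y0, Y2) w) < 0"
proof -
  have yY1: "young Y1" and yY0: "young Y0" and yY2: "\<forall>b\<in>Y1. young (Y2 b)"
    and ex: "\<exists>b\<in>Y1. Y2 b \<noteq> {}"
    using p unfolding fixed_points_def ring_fixed_points_def by auto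
  have f1: "finite Y1" and f0: "finite Y0" and f2: "\<forall>b\<in>Y1. finite (Y2 b)"
    using yY1 yY0 yY2 young_def by auto
  define A2 where "A2 = Y0 <+> (SIGMA b:Y1. Y2 b)"
  have fA2: "finite A2" unfolding A2_def using f0 f1 f2 by auto
  have T: "\<And>m. Tvir (Y1, Y0, Y2) m = lp_sum Y1 f1 m + lp_sum Y1 (\<lambda>x. - f1 x + (m_r1 + m_r2)) m
     - (\<Sum>z\<in>Y1 \<times> Y1. one_minus_sq m_r1 m_r2 (m - (case z of (x,y) \<Rightarrow> f1 x + - f1 y)))
     + lp_sum A2 f2 m + lp_sum A2 (\<lambda>x. - f2 x + (m_s1 + m_s2)) m
     - (\<Sum>z\<in>A2 \<times> A2. one_minus_sq m_s1 m_s2 (m - (case z of (x,y) \<Rightarrow> f2 x + - f2 y)))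
     + lp_sum (A2 \<times> Y1) (\<lambda>z. (case z of (x,y) \<Rightarrow> f2 x + - f1 y) + m_t) m"
    unfolding A2_def by (rule Tvir_form[OF f1 f0 f2])
  have TG: "finite (lp_supp (Tvir (Y1, Y0, Y2))) \<and> (\<Sum>w\<in>lp_supp (Tvir (Y1, Y0, Y2)) \<inter> Dset. Tvir (Y1, Y0, Y2) w) =
     (\<Sum>a\<in>Y1. ind (f1 a \<in> Dset)) + (\<Sum>a\<in>Y1. ind (- f1 a + (m_r1 + m_r2) \<in> Dset))
     - (\<Sum>z\<in>Y1 \<times> Y1. Rs m_r1 m_r2 Dset (case z of (x,y) \<Rightarrow> f1 x + - f1 y))
     + (\<Sum>a\<in>A2. ind (f2 a \<in> Dset)) + (\<Sum>a\<in>A2. ind (- f2 a + (m_s1 + m_s2) \<in> Dset))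
     - (\<Sum>z\<in>A2 \<times> A2. Rs m_s1 m_s2 Dset (case z of (x,y) \<Rightarrow> f2 x + - f2 y))
     + (\<Sum>z\<in>A2 \<times> Y1. ind ((case z of (x,y) \<Rightarrow> f2 x + - f1 y) + m_t \<in> Dset))"
    by (rule theta_generic[OF T]) (use f1 fA2 in \<open>auto simp: zero_prod_def\<close>)
  obtain b where b: "b \<in> Y1" "Y2 b \<noteq> {}" using ex by blast
  have "1 \<le> dg (Y2 b)" using dg_pos yY2 b by auto
  also have "dg (Y2 b) \<le> (\<Sum>b\<in>Y1. dg (Y2 b))"
    using f1 b(1) dg_nonneg by (intro member_le_sum) auto
  finally have sd: "1 \<le> (\<Sum>b\<in>Y1. dg (Y2 b))" .
  have sG: "(\<Sum>b\<in>Y1. 2 * dg (Y2 b)) \<le> (\<Sum>b\<in>Y1. GG (Y2 b))"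
    using f2 GG_ge by (intro sum_mono) auto
  have G0: "2 * dg Y0 \<le> GG Y0" using GG_ge f0 by auto
  have "(\<Sum>w\<in>lp_supp (Tvir (Y1, Y0, Y2)) \<inter> Dset. Tvir (Y1, Y0, Y2) w) =
     ind ((0,0) \<in> Y1) + 0 - G0 Y1 + dg Y0 + dg Y0 - (GG Y0 + (\<Sum>b\<in>Y1. GG (Y2 b))) + (\<Sum>b\<in>Y1. dg (Y2 b))"
    using TG unfolding A2_def G0_def[symmetric]
    by (simp only: P1[OF f1] P2 P4[OF f0] P5[OF f0] P6[OF f0 f1 f2] P7[OF f0 f1 f2] finite_SigmaI f1 f2)
  also have "\<dots> < 0" using G0_young[OF yY1] sd sG G0 by (simp add: sum_distrib_left[symmetric])
  finally show ?thesis using TG by blast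
qed

lemma isD_form: "isD w \<Longrightarrow> w = (0, 0, fst (snd (snd w)), fst (snd (snd w)), 0)"
  unfolding isD_def by (cases w) auto

lemma ev_D: assumes "isD w" "s1 \<noteq> 0"
  shows "mono_eval (-w) (r1, r2, s1, q / s1, t) = q powi (- fst (snd (snd w)))"
proof -
  define c where "c = fst (snd (snd w))"
  have w: "w = (0, 0, c, c, 0)" using isD_form[OF assms(1)] c_def by simp
  have "s1 powi (- c) \<noteq> 0" using assms(2) by (simp add: power_int_not_zero)
  then show ?thesis unfolding w c_def[symmetric] by (simp add: power_int_divide_distrib zero_prod_def)
qed

lemma ev_notD:
  fixes r1 r2 s1 t :: complex
  assumes nz: "s1 \<noteq> 0"
    and generic: "\<forall>a b c d :: int.
        r1 powi a * r2 powi b * s1 powi c * t powi d = 1 \<longrightarrow> a = 0 \<and> b = 0 \<and> c = 0 \<and> d = 0"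
    and nd: "\<not> isD w"
  shows "mono_eval (-w) (r1, r2, s1, 1 / s1, t) \<noteq> 1"
proof
  obtain a b c d e where w: "w = (a,b,c,d,e)" by (cases w) auto
  assume "mono_eval (-w) (r1, r2, s1, 1 / s1, t) = 1"
  then have "r1 powi (-a) * r2 powi (-b) * s1 powi (-c) * (1 / s1) powi (-d) * t powi (-e) = 1"
    unfolding w by simp
  moreover have "s1 powi (-c) * (1 / s1) powi (-d) = s1 powi (d - c)"
    using nz by (simp add: power_int_one_over power_int_minus power_int_diff field_simps)
  ultimately have "r1 powi (-a) * r2 powi (-b) * s1 powi (d - c) * t powi (-e) = 1"
    by (metis (no_types, lifting) mult.assoc)
  then have "-a = 0 \<and> -b = 0 \<and> d - c = 0 \<and> -e = 0" using generic by blast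
  then show False using nd unfolding w isD_def by simp
qed

lemma ev_cont: assumes "s1 \<noteq> 0"
  shows "((\<lambda>q. mono_eval (-w) (r1, r2, s1, q / s1, t)) \<longlongrightarrow> mono_eval (-w) (r1, r2, s1, 1 / s1, t)) (at 1)"
proof -
  obtain a b c d e where w: "w = (a,b,c,d,e)" by (cases w) auto
  have "((\<lambda>q::complex. q / s1) \<longlongrightarrow> 1 / s1) (at 1)" by (intro tendsto_intros) (simp add: assms)
  then have "((\<lambda>q. (q / s1) powi (-d)) \<longlongrightarrow> (1 / s1) powi (-d)) (at 1)"
    using assms by (intro tendsto_power_int) auto
  then show ?thesis unfolding w by (simp; intro tendsto_mult tendsto_const; assumption)
qed

lemma powi_prod: fixes x :: complex
  assumes "x \<noteq> 0" "finite A" shows "(\<Prod>a\<in>A. x powi f a) = x powi (\<Sum>a\<in>A. f a)"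
  using assms(2) by (induction A rule: finite_induct) (simp_all add: power_int_add assms(1))

lemma deriv_lim: fixes c :: int assumes "c \<noteq> 0"
  shows "((\<lambda>q::complex. (1 - q powi (-c)) / (q - 1)) \<longlongrightarrow> of_int c) (at 1)"
proof -
  have "((\<lambda>q::complex. q powi (-c)) has_field_derivative (of_int (-c) * 1 powi (-c - 1) * 1)) (at 1)"
    by (rule DERIV_power_int) (auto intro: DERIV_ident)
  then have "((\<lambda>q::complex. (q powi (-c) - 1 powi (-c)) / (q - 1)) \<longlongrightarrow> of_int (-c)) (at 1)"
    unfolding has_field_derivative_iff by simp
  then have "((\<lambda>q::complex. - ((q powi (-c) - 1) / (q - 1))) \<longlongrightarrow> - of_int (-c)) (at 1)"
    by (intro tendsto_minus) simp
  moreover have "\<And>q::complex. - ((q powi (-c) - 1) / (q - 1)) = (1 - q powi (-c)) / (q - 1)"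
    by (simp add: minus_divide_left)
  ultimately show ?thesis by simp
qed

lemma contrib_lim:
  fixes T :: lpoly and r1 r2 s1 t :: complex
  assumes s1: "s1 \<noteq> 0"
    and generic: "\<forall>a b c d :: int.
        r1 powi a * r2 powi b * s1 powi c * t powi d = 1 \<longrightarrow> a = 0 \<and> b = 0 \<and> c = 0 \<and> d = 0"
    and finS: "finite (lp_supp T)"
    and neg: "(\<Sum>w\<in>lp_supp T \<inter> Dset. T w) < 0"
  shows "((\<lambda>q. contrib_of T (r1, r2, s1, q / s1, t)) \<longlongrightarrow> 0) (at 1)"
proof (cases "(0::mono) \<in> lp_supp T")
  case True
  have "\<And>q. contrib_of T (r1, r2, s1, q / s1, t) = 0"
    unfolding contrib_of_def
  proof (rule prod_zero[OF finS], rule bexI[OF _ True])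
    fix q :: complex
    have "mono_eval (- 0) (r1, r2, s1, q / s1, t) = 1" by (simp add: zero_prod_def)
    moreover have "T 0 \<noteq> 0" using True unfolding lp_supp_def by simp
    ultimately show "(1 - mono_eval (- 0) (r1, r2, s1, q / s1, t)) powi - T 0 = 0" by simp
  qed
  then show ?thesis by simp
next
  case False
  let ?S = "lp_supp T"
  define c where "c = (\<lambda>w::mono. fst (snd (snd w)))"
  define u where "u = (\<lambda>w q. if isD w then (1 - q powi (- c w)) / (q - 1) else 1 - mono_eval (-w) (r1, r2, s1, q / s1, t))"
  define L where "L = (\<lambda>w. if isD w then of_int (c w) else 1 - mono_eval (-w) (r1, r2, s1, 1 / s1, t))"
  define K where "K = (\<Sum>w\<in>?S \<inter> Dset. - T w)"
  have K: "0 < K" unfolding K_def using neg by (simp add: sum_negf)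
  have cnz: "\<And>w. w \<in> ?S \<Longrightarrow> isD w \<Longrightarrow> c w \<noteq> 0"
  proof
    fix w assume "w \<in> ?S" "isD w" "c w = 0"
    then have "w = 0" using isD_form[of w] unfolding c_def by (simp add: zero_prod_def)
    then show False using False \<open>w \<in> ?S\<close> by simp
  qed
  have Lnz: "\<And>w. w \<in> ?S \<Longrightarrow> L w \<noteq> 0"
    unfolding L_def using cnz ev_notD[OF s1 generic] by auto
  have ulim: "\<And>w. w \<in> ?S \<Longrightarrow> ((\<lambda>q. u w q) \<longlongrightarrow> L w) (at 1)"
  proof -
    fix w assume w: "w \<in> ?S"
    show "((\<lambda>q. u w q) \<longlongrightarrow> L w) (at 1)"
    proof (cases "isD w")
      case True then show ?thesis unfolding u_def L_def using deriv_lim cnz[OF w True] by simp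
    next
      case False then show ?thesis unfolding u_def L_def using ev_cont[OF s1, of w r1 r2 t]
        by (simp add: tendsto_diff)
    qed
  qed
  have prodlim: "((\<lambda>q. \<Prod>w\<in>?S. u w q powi (- T w)) \<longlongrightarrow> (\<Prod>w\<in>?S. L w powi (- T w))) (at 1)"
    by (intro tendsto_prod tendsto_power_int ulim Lnz)
  have plim: "((\<lambda>q::complex. (q - 1) powi K) \<longlongrightarrow> 0) (at 1)"
  proof -
    have "((\<lambda>q::complex. (q - 1) ^ nat K) \<longlongrightarrow> (1 - 1) ^ nat K) (at 1)"
      by (intro tendsto_intros)
    moreover have "(0::complex) ^ nat K = 0" using K by (simp add: power_0_left)
    ultimately show ?thesis using K by (simp add: power_int_nonneg_exp)
  qed
  have "((\<lambda>q. (q - 1) powi K * (\<Prod>w\<in>?S. u w q powi (- T w))) \<longlongrightarrow> 0 * (\<Prod>w\<in>?S. L w powi (- T w))) (at 1)"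
    by (rule tendsto_mult[OF plim prodlim])
  then have lim: "((\<lambda>q. (q - 1) powi K * (\<Prod>w\<in>?S. u w q powi (- T w))) \<longlongrightarrow> 0) (at 1)" by simp
  have ev: "\<forall>\<^sub>F q in at 1. (q - 1) powi K * (\<Prod>w\<in>?S. u w q powi (- T w)) = contrib_of T (r1, r2, s1, q / s1, t)"
    unfolding eventually_at_filter
  proof (rule always_eventually, intro allI impI)
    fix q :: complex assume q: "q \<noteq> 1"
    have fac: "\<And>w. (1 - mono_eval (- w) (r1, r2, s1, q / s1, t)) powi (- T w)
       = (if isD w then (q - 1) powi (- T w) else 1) * u w q powi (- T w)"
    proof -
      fix w
      show "(1 - mono_eval (- w) (r1, r2, s1, q / s1, t)) powi (- T w)
       = (if isD w then (q - 1) powi (- T w) else 1) * u w q powi (- T w)"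
      proof (cases "isD w")
        case True
        have "1 - mono_eval (- w) (r1, r2, s1, q / s1, t) = (q - 1) * u w q"
          unfolding u_def using True q ev_D[OF True s1] by (simp add: c_def)
        then show ?thesis using True by (simp add: power_int_mult_distrib)
      next
        case False then show ?thesis unfolding u_def by simp
      qed
    qed
    have "contrib_of T (r1, r2, s1, q / s1, t) = (\<Prod>w\<in>?S. (if isD w then (q - 1) powi (- T w) else 1)) * (\<Prod>w\<in>?S. u w q powi (- T w))"
      unfolding contrib_of_def fac by (rule prod.distrib)
    also have "(\<Prod>w\<in>?S. (if isD w then (q - 1) powi (- T w) else 1)) = (\<Prod>w\<in>?S \<inter> Dset. (q - 1) powi (- T w))"
    proof -
      have "?S \<inter> Dset = {w\<in>?S. isD w}" unfolding Dset_def by auto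
      then show ?thesis using prod.inter_filter[OF finS, where g="\<lambda>w. (q - 1) powi - T w" and P=isD] by simp
    qed
    also have "\<dots> = (q - 1) powi K" unfolding K_def using q finS by (simp add: powi_prod)
    finally show "(q - 1) powi K * (\<Prod>w\<in>?S. u w q powi (- T w)) = contrib_of T (r1, r2, s1, q / s1, t)" by simp
  qed
  show ?thesis by (rule Lim_transform_eventually[OF lim ev])
qed

lemma young_box: assumes "young Y" "card Y \<le> n" shows "Y \<subseteq> {..n} \<times> {..n}"
proof
  fix p assume p: "p \<in> Y"
  obtain i j where ij: "p = (i,j)" by fastforce
  have fin: "finite Y" using assms young_def by auto
  have "(\<lambda>k. (k, 0::nat)) ` {..i} \<subseteq> Y" using assms(1) p ij unfolding young_def by blast
  then have "card ((\<lambda>k. (k, 0::nat)) ` {..i}) \<le> card Y" using fin by (rule card_mono[rotated])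
  moreover have "card ((\<lambda>k. (k, 0::nat)) ` {..i}) = Suc i" by (subst card_image) (auto simp: inj_on_def)
  ultimately have i: "i \<le> n" using assms(2) by simp
  have "(\<lambda>k. (0::nat, k)) ` {..j} \<subseteq> Y" using assms(1) p ij unfolding young_def by blast
  then have "card ((\<lambda>k. (0::nat, k)) ` {..j}) \<le> card Y" using fin by (rule card_mono[rotated])
  moreover have "card ((\<lambda>k. (0::nat, k)) ` {..j}) = Suc j" by (subst card_image) (auto simp: inj_on_def)
  ultimately have j: "j \<le> n" using assms(2) by simp
  show "p \<in> {..n} \<times> {..n}" using i j ij by simp
qed

lemma finite_fp: "finite (fixed_points M1 M2)"
proof -
  let ?B1 = "{..M1} \<times> {..M1}" and ?B2 = "{..M2} \<times> {..M2}"
  let ?F = "{f. \<forall>x. (x \<in> ?B1 \<longrightarrow> f x \<in> Pow ?B2) \<and> (x \<notin> ?B1 \<longrightarrow> f x = {})}"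
  have "fixed_points M1 M2 \<subseteq> Pow ?B1 \<times> Pow ?B2 \<times> ?F"
  proof
    fix p assume p: "p \<in> fixed_points M1 M2"
    obtain Y1 Y0 Y2 where pp: "p = (Y1, Y0, Y2)" by (cases p) auto
    have y: "young Y1" "card Y1 = M1" "young Y0" "\<forall>b\<in>Y1. young (Y2 b)" "\<forall>b. b \<notin> Y1 \<longrightarrow> Y2 b = {}"
      "card Y0 + (\<Sum>b\<in>Y1. card (Y2 b)) = M2"
      using p pp unfolding fixed_points_def by auto
    have fY1: "finite Y1" using y(1) young_def by auto
    have B1: "Y1 \<subseteq> ?B1" using young_box y by simp
    have B0: "Y0 \<subseteq> ?B2" using young_box y by simp
    have B2: "\<And>b. b \<in> Y1 \<Longrightarrow> Y2 b \<subseteq> ?B2"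
    proof -
      fix b assume b: "b \<in> Y1"
      have "card (Y2 b) \<le> (\<Sum>b\<in>Y1. card (Y2 b))" using b fY1 by (intro member_le_sum) auto
      then show "Y2 b \<subseteq> ?B2" using young_box[of "Y2 b" M2] y b by simp
    qed
    have "\<forall>x. (x \<in> ?B1 \<longrightarrow> Y2 x \<in> Pow ?B2) \<and> (x \<notin> ?B1 \<longrightarrow> Y2 x = {})"
    proof (intro allI conjI impI)
      fix x assume x: "x \<in> ?B1"
      show "Y2 x \<in> Pow ?B2"
      proof (cases "x \<in> Y1")
        case True then show ?thesis using B2 by simp
      next
        case False then have "Y2 x = {}" using y(5) by blast
        then show ?thesis by simp
      qed
    next
      fix x assume "x \<notin> ?B1"
      then have "x \<notin> Y1" using B1 by auto
      then show "Y2 x = {}" using y(5) by blast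
    qed
    then have "Y2 \<in> ?F" by simp
    then show "p \<in> Pow ?B1 \<times> Pow ?B2 \<times> ?F" using pp B1 B0 by auto
  qed
  moreover have "finite (Pow ?B1 \<times> Pow ?B2 \<times> ?F)"
    by (intro finite_cartesian_product finite_Pow_iff[THEN iffD2] finite_set_of_finite_funs) auto
  ultimately show ?thesis by (rule finite_subset)
qed

theorem proposition7:
  fixes M1 M2 :: nat and r1 r2 s1 t :: complex
  assumes nz: "r1 \<noteq> 0" "r2 \<noteq> 0" "s1 \<noteq> 0" "t \<noteq> 0"
    and generic: "\<forall>a b c d :: int.
        r1 powi a * r2 powi b * s1 powi c * t powi d = 1 \<longrightarrow> a = 0 \<and> b = 0 \<and> c = 0 \<and> d = 0"
  shows "((\<lambda>q. chi_M M1 M2 (r1, r2, s1, q / s1, t) - chi_Mring M1 M2 (r1, r2, s1, q / s1, t))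
            \<longlongrightarrow> 0) (at 1) \<and>
         (\<forall>p \<in> fixed_points M1 M2 - ring_fixed_points M1 M2.
           ((\<lambda>q. contrib p (r1, r2, s1, q / s1, t)) \<longlongrightarrow> 0) (at 1))"
proof -
  have each: "\<forall>p \<in> fixed_points M1 M2 - ring_fixed_points M1 M2.
           ((\<lambda>q. contrib p (r1, r2, s1, q / s1, t)) \<longlongrightarrow> 0) (at 1)"
  proof
    fix p assume p: "p \<in> fixed_points M1 M2 - ring_fixed_points M1 M2"
    obtain Y1 Y0 Y2 where pp: "p = (Y1, Y0, Y2)" by (cases p) auto
    show "((\<lambda>q. contrib p (r1, r2, s1, q / s1, t)) \<longlongrightarrow> 0) (at 1)"
      unfolding contrib_def pp
      using contrib_lim[OF nz(3) generic] theta_fp[of Y1 Y0 Y2 M1 M2] p pp by blast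
  qed
  have sub: "ring_fixed_points M1 M2 \<subseteq> fixed_points M1 M2" unfolding ring_fixed_points_def by auto
  have fin: "finite (fixed_points M1 M2)" by (rule finite_fp)
  have "\<And>q. chi_M M1 M2 (r1, r2, s1, q / s1, t) - chi_Mring M1 M2 (r1, r2, s1, q / s1, t)
      = (\<Sum>p\<in>fixed_points M1 M2 - ring_fixed_points M1 M2. contrib p (r1, r2, s1, q / s1, t))"
    unfolding chi_M_def chi_Mring_def by (simp add: sum_diff[OF fin sub])
  moreover have "((\<lambda>q. \<Sum>p\<in>fixed_points M1 M2 - ring_fixed_points M1 M2. contrib p (r1, r2, s1, q / s1, t)) \<longlongrightarrow> 0) (at 1)"
    using each by (intro tendsto_null_sum) auto
  ultimately show ?thesis using each by simp
qed

end
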